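(* Let $1\le i,j,a\le n$ with $i<j$. Then in ${\boldsymbol U}_{v}(\mathfrak q_n)$: \[ \mathsf K_{\bar a}\mathsf E_{i,j}=\begin{cases}\mathsf E_{i,j}\mathsf K_{\bar a} & (a<i\text{ or } i<a<j\text{ or }a>j),\\ v\mathsf E_{i,j}\mathsf K_{\bar i}-\mathsf E_{\bar i}\mathsf E_{i+1,j}\mathsf K_i^{-1}+v^{-1}\mathsf E_{i+1,j}\mathsf E_{\bar i}\mathsf K_i^{-1} & (a=i,\ j>i+1),\\ v^{-1}\mathsf E_{i,j}\mathsf K_{\bar j}-\overline{\mathsf E}_{i,j}\mathsf K_j^{-1} & (a=j);\end{cases} \] \[ \mathsf K_{\bar a}\overline{\mathsf E}_{i,j}=\begin{cases}-\overline{\mathsf E}_{i,j}\mathsf K_{\bar a} & (a<i\text{ or } i<a<j\text{ or }a>j),\\ -v\overline{\mathsf E}_{i,j}\mathsf K_{\bar i}-\mathsf E_{\bar i}\overline{\mathsf E}_{i+1,j}\mathsf K_i^{-1}-v^{-1}\overline{\mathsf E}_{i+1,j}\mathsf E_{\bar i}\mathsf K_i^{-1} & (a=i,\ j>i+1),\\ -v^{-1}\overline{\mathsf E}_{i,j}\mathsf K_{\bar j}+\mathsf E_{i,j}\mathsf K_j^{-1} & (a=j).\end{cases} \]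
   Context: Let $v$ be an indeterminate. The quantum queer superalgebra ${\boldsymbol U}_{v}(\mathfrak q_n)$ is the associative superalgebra over $\mathbb Q(v)$ generated by even generators $\mathsf K_i,\mathsf K_i^{-1}$ ($1\le i\le n$), $\mathsf E_j,\mathsf F_j$ ($1\le j\le n-1$) and odd generators $\mathsf K_{\bar i}$ ($1\le i\le n$), $\mathsf E_{\bar j},\mathsf F_{\bar j}$ ($1\le j\le n-1$), subject to the following relations (indices are taken only where they make sense), where $(\epsilon_i,\alpha_j)=\delta_{i,j}-\delta_{i,j+1}$: (QQ1) $\mathsf K_i\mathsf K_i^{-1}=\mathsf K_i^{-1}\mathsf K_i=1$, $\mathsf K_i\mathsf K_j=\mathsf K_j\mathsf K_i$, $\mathsf K_i\mathsf K_{\bar j}=\mathsf K_{\bar j}\mathsf K_i$, $\mathsf K_{\bar i}\mathsf K_{\bar j}+\mathsf K_{\bar j}\mathsf K_{\bar i}=2\delta_{i,j}\frac{\mathsf K_i^2-\mathsf K_i^{-2}}{v^2-v^{-2}}$. (QQ2) $\mathsf K_i\mathsf E_j=v^{(\epsilon_i,\alpha_j)}\mathsf E_j\mathsf K_i$, $\mathsf K_i\mathsf E_{\bar j}=v^{(\epsilon_i,\alpha_j)}\mathsf E_{\bar j}\mathsf K_i$, $\mathsf K_i\mathsf F_j=v^{-(\epsilon_i,\alpha_j)}\mathsf F_j\mathsf K_i$, $\mathsf K_i\mathsf F_{\bar j}=v^{-(\epsilon_i,\alpha_j)}\mathsf F_{\bar j}\mathsf K_i$. (QQ3) $\mathsf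 K_{\bar i}\mathsf E_i-v\mathsf E_i\mathsf K_{\bar i}=\mathsf E_{\bar i}\mathsf K_i^{-1}$, $v\mathsf K_{\bar i}\mathsf E_{i-1}-\mathsf E_{i-1}\mathsf K_{\bar i}=-\mathsf K_i^{-1}\mathsf E_{\overline{i-1}}$, $\mathsf K_{\bar i}\mathsf F_i-v\mathsf F_i\mathsf K_{\bar i}=-\mathsf F_{\bar i}\mathsf K_i$, $v\mathsf K_{\bar i}\mathsf F_{i-1}-\mathsf F_{i-1}\mathsf K_{\bar i}=\mathsf K_i\mathsf F_{\overline{i-1}}$, $\mathsf K_{\bar i}\mathsf E_{\bar i}+v\mathsf E_{\bar i}\mathsf K_{\bar i}=\mathsf E_i\mathsf K_i^{-1}$, $v\mathsf K_{\bar i}\mathsf E_{\overline{i-1}}+\mathsf E_{\overline{i-1}}\mathsf K_{\bar i}=\mathsf K_i^{-1}\mathsf E_{i-1}$, $\mathsf K_{\bar i}\mathsf F_{\bar i}+v\mathsf F_{\bar i}\mathsf K_{\bar i}=\mathsf F_i\mathsf K_i$, $v\mathsf K_{\bar i}\mathsf F_{\overline{i-1}}+\mathsf F_{\overline{i-1}}\mathsf K_{\bar i}=\mathsf K_i\mathsf F_{i-1}$, and for $j\ne i,i-1$: $\mathsf K_{\bar i}\mathsf E_j=\mathsf E_j\mathsf K_{\bar i}$, $\mathsf K_{\bar i}\mathsf F_j=\mathsf F_j\mathsf K_{\bar i}$, $\mathsf K_{\bar i}\mathsf E_{\bar j}=-\mathsf E_{\bar j}\mathsf K_{\bar i}$,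 $\mathsf K_{\bar i}\mathsf F_{\bar j}=-\mathsf F_{\bar j}\mathsf K_{\bar i}$. (QQ4) $\mathsf E_i\mathsf F_j-\mathsf F_j\mathsf E_i=\delta_{i,j}\frac{\mathsf K_i\mathsf K_{i+1}^{-1}-\mathsf K_i^{-1}\mathsf K_{i+1}}{v-v^{-1}}$, $\mathsf E_{\bar i}\mathsf F_{\bar j}+\mathsf F_{\bar j}\mathsf E_{\bar i}=\delta_{i,j}\big(\frac{\mathsf K_i\mathsf K_{i+1}-\mathsf K_i^{-1}\mathsf K_{i+1}^{-1}}{v-v^{-1}}+(v-v^{-1})\mathsf K_{\bar i}\mathsf K_{\overline{i+1}}\big)$, $\mathsf E_i\mathsf F_{\bar j}-\mathsf F_{\bar j}\mathsf E_i=\delta_{i,j}(\mathsf K_{i+1}^{-1}\mathsf K_{\bar i}-\mathsf K_{\overline{i+1}}\mathsf K_i^{-1})$, $\mathsf E_{\bar i}\mathsf F_j-\mathsf F_j\mathsf E_{\bar i}=\delta_{i,j}(\mathsf K_{i+1}\mathsf K_{\bar i}-\mathsf K_{\overline{i+1}}\mathsf K_i)$. (QQ5) $\mathsf E_{\bar i}^2=-\frac{v-v^{-1}}{v+v^{-1}}\mathsf E_i^2$, $\mathsf F_{\bar i}^2=\frac{v-v^{-1}}{v+v^{-1}}\mathsf F_i^2$; for $|i-j|\ne1$: $\mathsf E_i\mathsf E_{\bar j}=\mathsf E_{\bar j}\mathsf E_i$, $\mathsf F_i\mathsf F_{\bar j}=\mathsf F_{\bar j}\mathsf F_i$; for $|i-j|>1$: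 $\mathsf E_i\mathsf E_j=\mathsf E_j\mathsf E_i$, $\mathsf F_i\mathsf F_j=\mathsf F_j\mathsf F_i$, $\mathsf E_{\bar i}\mathsf E_{\bar j}=-\mathsf E_{\bar j}\mathsf E_{\bar i}$, $\mathsf F_{\bar i}\mathsf F_{\bar j}=-\mathsf F_{\bar j}\mathsf F_{\bar i}$; $\mathsf E_i\mathsf E_{i+1}-v\mathsf E_{i+1}\mathsf E_i=\mathsf E_{\bar i}\mathsf E_{\overline{i+1}}+v\mathsf E_{\overline{i+1}}\mathsf E_{\bar i}$, $\mathsf E_i\mathsf E_{\overline{i+1}}-v\mathsf E_{\overline{i+1}}\mathsf E_i=\mathsf E_{\bar i}\mathsf E_{i+1}-v\mathsf E_{i+1}\mathsf E_{\bar i}$, $\mathsf F_i\mathsf F_{i+1}-v\mathsf F_{i+1}\mathsf F_i=-(\mathsf F_{\bar i}\mathsf F_{\overline{i+1}}+v\mathsf F_{\overline{i+1}}\mathsf F_{\bar i})$, $\mathsf F_i\mathsf F_{\overline{i+1}}-v\mathsf F_{\overline{i+1}}\mathsf F_i=\mathsf F_{\bar i}\mathsf F_{i+1}-v\mathsf F_{i+1}\mathsf F_{\bar i}$. (QQ6) for $|i-j|=1$: $\mathsf E_i^2X-(v+v^{-1})\mathsf E_iX\mathsf E_i+X\mathsf E_i^2=0$ for $X\in\{\mathsf E_j,\mathsf E_{\bar j}\}$ and $\mathsf F_i^2Y-(v+v^{-1})\mathsf F_iY\mathsf F_i+Y\mathsf F_i^2=0$ for $Y\in\{\mathsf F_j,\mathsf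 F_{\bar j}\}$. Quantum root vectors: for $1\le i\le n-1$ put $\mathsf E_{i,i+1}=\mathsf E_i$, $\overline{\mathsf E}_{i,i+1}=\mathsf E_{\bar i}$, $\mathsf E_{i+1,i}=\mathsf F_i$, $\overline{\mathsf E}_{i+1,i}=\mathsf F_{\bar i}$, and recursively for $i+1<j\le n$: $\mathsf E_{i,j}=-\mathsf E_{i,j-1}\mathsf E_{j-1}+v^{-1}\mathsf E_{j-1}\mathsf E_{i,j-1}$, $\overline{\mathsf E}_{i,j}=-\mathsf E_{i,j-1}\mathsf E_{\overline{j-1}}+v^{-1}\mathsf E_{\overline{j-1}}\mathsf E_{i,j-1}$, $\mathsf E_{j,i}=-\mathsf F_{j-1}\mathsf E_{j-1,i}+v\mathsf E_{j-1,i}\mathsf F_{j-1}$, $\overline{\mathsf E}_{j,i}=-\mathsf F_{\overline{j-1}}\mathsf E_{j-1,i}+v\mathsf E_{j-1,i}\mathsf F_{\overline{j-1}}$. *)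

theory Defs
  imports Main "HOL-Computational_Algebra.Polynomial"
begin

text \<open>Scalars: a field 'k of characteristic 0 containing an element v that is
transcendental over the rationals (so 'k contains a copy of Q(v)).  An algebra
over 'k is a ring 'a together with a unital ring homomorphism sc from 'k into
the centre of 'a.\<close>

definition transcendental_rat :: "'k::field_char_0 \<Rightarrow> bool" where
  "transcendental_rat v \<longleftrightarrow> (\<forall>p::rat poly. p \<noteq> 0 \<longrightarrow> poly (map_poly of_rat p) v \<noteq> 0)"

definition central_alg_hom :: "('k::field \<Rightarrow> 'a::ring_1) \<Rightarrow> bool" where
  "central_alg_hom sc \<longleftrightarrow> sc 1 = 1 \<and> (\<forall>x y. sc (x + y) = sc x + sc y)
     \<and> (\<forall>x y. sc (x * y) = sc x * sc y) \<and> (\<forall>c a. sc c * a = a * sc c)"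

definition eps_alpha :: "nat \<Rightarrow> nat \<Rightarrow> int" where
  "eps_alpha i j = (if i = j then 1 else 0) - (if i = j + 1 then 1 else 0)"

text \<open>Defining relations (QQ1)-(QQ6) of U_v(q_n). Generators: K i, Ki i (= K_i^{-1}),
Kb i (= K_{bar i}) for 1 \<le> i \<le> n; E j, F j, Eb j, Fb j for 1 \<le> j \<le> n-1.\<close>
definition qq_rels ::
  "('k::field \<Rightarrow> 'a::ring_1) \<Rightarrow> 'k \<Rightarrow> nat \<Rightarrow> (nat \<Rightarrow> 'a) \<Rightarrow> (nat \<Rightarrow> 'a) \<Rightarrow> (nat \<Rightarrow> 'a)
    \<Rightarrow> (nat \<Rightarrow> 'a) \<Rightarrow> (nat \<Rightarrow> 'a) \<Rightarrow> (nat \<Rightarrow> 'a) \<Rightarrow> (nat \<Rightarrow> 'a) \<Rightarrow> bool" where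
  "qq_rels sc v n K Ki Kb E F Eb Fb \<longleftrightarrow>
   (\<forall>i\<in>{1..n}. \<forall>j\<in>{1..n}.
      K i * Ki i = 1 \<and> Ki i * K i = 1 \<and> K i * K j = K j * K i \<and> K i * Kb j = Kb j * K i \<and>
      Kb i * Kb j + Kb j * Kb i =
        (if i = j then sc (2 / (v ^ 2 - (inverse v) ^ 2)) * (K i * K i - Ki i * Ki i) else 0)) \<and>
   (\<forall>i\<in>{1..n}. \<forall>j\<in>{1..n-1}.
      K i * E j = sc (v powi eps_alpha i j) * E j * K i \<and>
      K i * Eb j = sc (v powi eps_alpha i j) * Eb j * K i \<and>
      K i * F j = sc (v powi (- eps_alpha i j)) * F j * K i \<and>
      K i * Fb j = sc (v powi (- eps_alpha i j)) * Fb j * K i) \<and>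
   (\<forall>i\<in>{1..n}.
      (i \<le> n - 1 \<longrightarrow>
         Kb i * E i - sc v * E i * Kb i = Eb i * Ki i \<and>
         Kb i * F i - sc v * F i * Kb i = - (Fb i * K i) \<and>
         Kb i * Eb i + sc v * Eb i * Kb i = E i * Ki i \<and>
         Kb i * Fb i + sc v * Fb i * Kb i = F i * K i) \<and>
      (2 \<le> i \<longrightarrow>
         sc v * Kb i * E (i - 1) - E (i - 1) * Kb i = - (Ki i * Eb (i - 1)) \<and>
         sc v * Kb i * F (i - 1) - F (i - 1) * Kb i = K i * Fb (i - 1) \<and>
         sc v * Kb i * Eb (i - 1) + Eb (i - 1) * Kb i = Ki i * E (i - 1) \<and>
         sc v * Kb i * Fb (i - 1) + Fb (i - 1) * Kb i = K i * F (i - 1)) \<and>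
      (\<forall>j\<in>{1..n-1}. j \<noteq> i \<and> j + 1 \<noteq> i \<longrightarrow>
         Kb i * E j = E j * Kb i \<and> Kb i * F j = F j * Kb i \<and>
         Kb i * Eb j = - (Eb j * Kb i) \<and> Kb i * Fb j = - (Fb j * Kb i))) \<and>
   (\<forall>i\<in>{1..n-1}. \<forall>j\<in>{1..n-1}.
      E i * F j - F j * E i =
        (if i = j then sc (1 / (v - inverse v)) * (K i * Ki (i + 1) - Ki i * K (i + 1)) else 0) \<and>
      Eb i * Fb j + Fb j * Eb i =
        (if i = j then sc (1 / (v - inverse v)) * (K i * K (i + 1) - Ki i * Ki (i + 1))
                       + sc (v - inverse v) * Kb i * Kb (i + 1) else 0) \<and>
      E i * Fb j - Fb j * E i =
        (if i = j then Ki (i + 1) * Kb i - Kb (i + 1) * Ki i else 0) \<and>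
      Eb i * F j - F j * Eb i =
        (if i = j then K (i + 1) * Kb i - Kb (i + 1) * K i else 0)) \<and>
   (\<forall>i\<in>{1..n-1}.
      Eb i * Eb i = - (sc ((v - inverse v) / (v + inverse v)) * (E i * E i)) \<and>
      Fb i * Fb i = sc ((v - inverse v) / (v + inverse v)) * (F i * F i)) \<and>
   (\<forall>i\<in>{1..n-1}. \<forall>j\<in>{1..n-1}. i + 1 \<noteq> j \<and> j + 1 \<noteq> i \<longrightarrow>
      E i * Eb j = Eb j * E i \<and> F i * Fb j = Fb j * F i) \<and>
   (\<forall>i\<in>{1..n-1}. \<forall>j\<in>{1..n-1}. i + 1 < j \<or> j + 1 < i \<longrightarrow>
      E i * E j = E j * E i \<and> F i * F j = F j * F i \<and>
      Eb i * Eb j = - (Eb j * Eb i) \<and> Fb i * Fb j = - (Fb j * Fb i)) \<and>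
   (\<forall>i\<in>{1..n-1}. i + 1 \<le> n - 1 \<longrightarrow>
      E i * E (i + 1) - sc v * E (i + 1) * E i = Eb i * Eb (i + 1) + sc v * Eb (i + 1) * Eb i \<and>
      E i * Eb (i + 1) - sc v * Eb (i + 1) * E i = Eb i * E (i + 1) - sc v * E (i + 1) * Eb i \<and>
      F i * F (i + 1) - sc v * F (i + 1) * F i = - (Fb i * Fb (i + 1) + sc v * Fb (i + 1) * Fb i) \<and>
      F i * Fb (i + 1) - sc v * Fb (i + 1) * F i = Fb i * F (i + 1) - sc v * F (i + 1) * Fb i) \<and>
   (\<forall>i\<in>{1..n-1}. \<forall>j\<in>{1..n-1}. i + 1 = j \<or> j + 1 = i \<longrightarrow>
      (\<forall>X\<in>{E j, Eb j}. E i * E i * X - sc (v + inverse v) * E i * X * E i + X * E i * E i = 0) \<and>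
      (\<forall>Y\<in>{F j, Fb j}. F i * F i * Y - sc (v + inverse v) * F i * Y * F i + Y * F i * F i = 0))"

text \<open>Quantum root vectors. Erv sc v E i d = E_{i,i+d+1},
 Ebrv sc v E Eb i d = bar E_{i,i+d+1}.\<close>
primrec Erv :: "('k::field \<Rightarrow> 'a::ring_1) \<Rightarrow> 'k \<Rightarrow> (nat \<Rightarrow> 'a) \<Rightarrow> nat \<Rightarrow> nat \<Rightarrow> 'a" where
  "Erv sc v E i 0 = E i"
| "Erv sc v E i (Suc d) = - (Erv sc v E i d * E (i + d + 1)) + sc (inverse v) * E (i + d + 1) * Erv sc v E i d"

primrec Ebrv :: "('k::field \<Rightarrow> 'a::ring_1) \<Rightarrow> 'k \<Rightarrow> (nat \<Rightarrow> 'a) \<Rightarrow> (nat \<Rightarrow> 'a) \<Rightarrow> nat \<Rightarrow> nat \<Rightarrow> 'a" where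
  "Ebrv sc v E Eb i 0 = Eb i"
| "Ebrv sc v E Eb i (Suc d) = - (Erv sc v E i d * Eb (i + d + 1)) + sc (inverse v) * Eb (i + d + 1) * Erv sc v E i d"

definition Eij :: "('k::field \<Rightarrow> 'a::ring_1) \<Rightarrow> 'k \<Rightarrow> (nat \<Rightarrow> 'a) \<Rightarrow> nat \<Rightarrow> nat \<Rightarrow> 'a" where
  "Eij sc v E i j = Erv sc v E i (j - i - 1)"

definition Ebij :: "('k::field \<Rightarrow> 'a::ring_1) \<Rightarrow> 'k \<Rightarrow> (nat \<Rightarrow> 'a) \<Rightarrow> (nat \<Rightarrow> 'a) \<Rightarrow> nat \<Rightarrow> nat \<Rightarrow> 'a" where
  "Ebij sc v E Eb i j = Ebrv sc v E Eb i (j - i - 1)"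

end

theory Submission
  imports Defs
begin

locale QQ =
  fixes sc :: "'k::field_char_0 \<Rightarrow> 'a::ring_1" and v :: 'k and n :: nat
    and K Ki Kb E F Eb Fb :: "nat \<Rightarrow> 'a"
  assumes rels: "qq_rels sc v n K Ki Kb E F Eb Fb"
    and hom: "central_alg_hom sc"
    and v0: "v \<noteq> 0"
begin

lemma central: "x * (sc c * y) = sc c * (x * y)" "x * sc c = sc c * x"
  using hom unfolding central_alg_hom_def by (metis mult.assoc)+

lemma sc1: "sc 1 = 1" using hom unfolding central_alg_hom_def by blast
lemma scm: "sc (x*y) = sc x * sc y" using hom unfolding central_alg_hom_def by blast

lemma wu: "sc v * (sc (inverse v) * y) = y" "sc (inverse v) * (sc v * y) = y"
  "sc v * sc (inverse v) = 1" "sc (inverse v) * sc v = 1"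
  using v0 by (simp_all add: mult.assoc[symmetric] scm[symmetric] sc1)

lemmas scal = central[where x="E k" for k] central[where x="Eb k" for k]
  central[where x="Kb k" for k] central[where x="Ki k" for k] central[where x="K k" for k]
  central[where x="Erv sc v E i d" for i d] central[where x="Ebrv sc v E Eb i d" for i d]

abbreviation "w \<equiv> sc v"
abbreviation "u \<equiv> sc (inverse v)"

lemmas R = rels[unfolded qq_rels_def]
lemmas R1 = R[THEN conjunct1]
lemmas R2 = R[THEN conjunct2, THEN conjunct1]
lemmas R3 = R[THEN conjunct2, THEN conjunct2, THEN conjunct1]
lemmas R4 = R[THEN conjunct2, THEN conjunct2, THEN conjunct2, THEN conjunct1]
lemmas R5 = R[THEN conjunct2, THEN conjunct2, THEN conjunct2, THEN conjunct2, THEN conjunct1]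
lemmas R6 = R[THEN conjunct2, THEN conjunct2, THEN conjunct2, THEN conjunct2, THEN conjunct2, THEN conjunct1]
lemmas R7 = R[THEN conjunct2, THEN conjunct2, THEN conjunct2, THEN conjunct2, THEN conjunct2, THEN conjunct2, THEN conjunct1]
lemmas R8 = R[THEN conjunct2, THEN conjunct2, THEN conjunct2, THEN conjunct2, THEN conjunct2, THEN conjunct2, THEN conjunct2, THEN conjunct1]
lemmas R9 = R[THEN conjunct2, THEN conjunct2, THEN conjunct2, THEN conjunct2, THEN conjunct2, THEN conjunct2, THEN conjunct2, THEN conjunct2]

lemma Ki_K: "k \<in> {1..n} \<Longrightarrow> Ki k * K k = 1" "k \<in> {1..n} \<Longrightarrow> K k * Ki k = 1"
  using R1 by blast+


lemma inv_comm:
  assumes KK: "Ki' * K' = 1" "K' * Ki' = 1" and KX: "K' * X = sc e * X * K'" and e: "e \<noteq> 0"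
  shows "Ki' * X = sc (inverse e) * (X * Ki')"
proof -
  have ie: "sc (inverse e) * sc e = 1" using e by (simp add: scm[symmetric] sc1)
  have XK: "X * K' = sc (inverse e) * (K' * X)"
    by (simp add: KX mult.assoc[symmetric] ie)
  have "Ki' * X = Ki' * (X * K') * Ki'" using KK by (simp add: mult.assoc)
  also have "\<dots> = Ki' * (sc (inverse e) * (K' * X)) * Ki'" unfolding XK ..
  also have "\<dots> = sc (inverse e) * ((Ki' * K') * X * Ki')"
    unfolding central(1)[of Ki'] by (simp only: mult.assoc)
  also have "\<dots> = sc (inverse e) * (X * Ki')" using KK by simp
  finally show ?thesis .
qed

lemma Kcomm:
  assumes "k \<in> {1..n}" "m \<in> {1..n-1}"
  shows "Ki k * E m = sc (inverse (v powi eps_alpha k m)) * (E m * Ki k)"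
    "Ki k * Eb m = sc (inverse (v powi eps_alpha k m)) * (Eb m * Ki k)"
proof -
  have KE: "K k * E m = sc (v powi eps_alpha k m) * E m * K k"
    "K k * Eb m = sc (v powi eps_alpha k m) * Eb m * K k"
    using assms R2 by blast+
  have KK: "Ki k * K k = 1" "K k * Ki k = 1" using Ki_K assms by auto
  have nz: "v powi eps_alpha k m \<noteq> 0" using v0 by simp
  show "Ki k * E m = sc (inverse (v powi eps_alpha k m)) * (E m * Ki k)"
    by (rule inv_comm[OF KK KE(1) nz])
  show "Ki k * Eb m = sc (inverse (v powi eps_alpha k m)) * (Eb m * Ki k)"
    by (rule inv_comm[OF KK KE(2) nz])
qed

lemma KiE_far:
  assumes "k \<in> {1..n}" "m \<in> {1..n-1}" "k \<noteq> m" "k \<noteq> m + 1"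
  shows "Ki k * E m = E m * Ki k" "Ki k * Eb m = Eb m * Ki k"
  using Kcomm[OF assms(1,2)] assms(3,4) by (simp_all add: eps_alpha_def sc1)

lemma KiE_same:
  assumes "m \<in> {1..n-1}"
  shows "Ki m * E m = u * (E m * Ki m)" "Ki m * Eb m = u * (Eb m * Ki m)"
  using Kcomm[of m m] assms by (auto simp: eps_alpha_def)

lemma KiE_next:
  assumes "m \<in> {1..n-1}"
  shows "Ki (m+1) * E m = w * (E m * Ki (m+1))" "Ki (m+1) * Eb m = w * (Eb m * Ki (m+1))"
  using Kcomm[of "m+1" m] assms by (auto simp: eps_alpha_def power_int_minus)

lemma KbE_same:
  assumes "m \<in> {1..n-1}"
  shows "Kb m * E m = w * (E m * Kb m) + Eb m * Ki m"
    "Kb m * Eb m = E m * Ki m - w * (Eb m * Kb m)"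
proof -
  have "m \<in> {1..n}" "m \<le> n - 1" using assms by auto
  then have "Kb m * E m - w * E m * Kb m = Eb m * Ki m"
     "Kb m * Eb m + w * Eb m * Kb m = E m * Ki m"
    using R3 by blast+
  then show "Kb m * E m = w * (E m * Kb m) + Eb m * Ki m"
    "Kb m * Eb m = E m * Ki m - w * (Eb m * Kb m)"
    by (simp_all only: mult.assoc eq_diff_eq add_diff_eq[symmetric] diff_eq_eq add.commute)
qed

lemma KbE_prev:
  assumes "m \<in> {1..n-1}"
  shows "Kb (m+1) * E m = u * (E m * Kb (m+1)) - Eb m * Ki (m+1)"
    "Kb (m+1) * Eb m = E m * Ki (m+1) - u * (Eb m * Kb (m+1))"
proof -
  have "m+1 \<in> {1..n}" "2 \<le> m + 1" using assms by auto
  then have h: "w * Kb (m+1) * E m - E m * Kb (m+1) = - (Ki (m+1) * Eb m)"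
     "w * Kb (m+1) * Eb m + Eb m * Kb (m+1) = Ki (m+1) * E m"
    using R3 by fastforce+
  have h1: "w * (Kb (m+1) * E m) = E m * Kb (m+1) - w * (Eb m * Ki (m+1))"
    using h(1) KiE_next(2)[OF assms] by (simp add: mult.assoc algebra_simps)
  have h2: "w * (Kb (m+1) * Eb m) = w * (E m * Ki (m+1)) - Eb m * Kb (m+1)"
    using h(2) KiE_next(1)[OF assms] by (simp add: mult.assoc algebra_simps)
  have "u * (w * (Kb (m+1) * E m)) = u * (E m * Kb (m+1) - w * (Eb m * Ki (m+1)))"
    using h1 by simp
  then show "Kb (m+1) * E m = u * (E m * Kb (m+1)) - Eb m * Ki (m+1)"
    by (simp add: wu right_diff_distrib)
  have "u * (w * (Kb (m+1) * Eb m)) = u * (w * (E m * Ki (m+1)) - Eb m * Kb (m+1))"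
    using h2 by simp
  then show "Kb (m+1) * Eb m = E m * Ki (m+1) - u * (Eb m * Kb (m+1))"
    by (simp add: wu right_diff_distrib)
qed

lemma KbE_far:
  assumes "k \<in> {1..n}" "m \<in> {1..n-1}" "k \<noteq> m" "k \<noteq> m + 1"
  shows "Kb k * E m = E m * Kb k" "Kb k * Eb m = - (Eb m * Kb k)"
  using R3 assms by fastforce+

lemma QQ5a:
  assumes "m \<in> {1..n-1}" "m + 1 \<le> n - 1"
  shows "E m * E (m+1) - w * (E (m+1) * E m) = Eb m * Eb (m+1) + w * (Eb (m+1) * Eb m)"
    "E m * Eb (m+1) - w * (Eb (m+1) * E m) = Eb m * E (m+1) - w * (E (m+1) * Eb m)"
  using R8 assms by (simp_all add: mult.assoc)

lemma EEb_far:
  assumes "p \<in> {1..n-1}" "q \<in> {1..n-1}" "p + 1 \<noteq> q" "q + 1 \<noteq> p"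
  shows "E p * Eb q = Eb q * E p"
  using R6 assms by blast

lemma EE_far:
  assumes "p \<in> {1..n-1}" "q \<in> {1..n-1}" "p + 1 < q \<or> q + 1 < p"
  shows "E p * E q = E q * E p" "Eb p * Eb q = - (Eb q * Eb p)"
  using R7 assms by blast+

abbreviation "Rv i d \<equiv> Erv sc v E i d"
abbreviation "Bv i d \<equiv> Ebrv sc v E Eb i d"

lemma xt: "a * b = c \<Longrightarrow> a * (b * y) = c * (y::'a)" by (subst mult.assoc[symmetric]) simp

lemmas NS = mult.assoc ring_distribs mult_minus_right mult_minus_left minus_add_distrib minus_minus diff_conv_add_uminus scal wu

lemma recs: "m = i + d + 1 \<Longrightarrow> Rv i (Suc d) = - (Rv i d * E m) + u * (E m * Rv i d)"
   "m = i + d + 1 \<Longrightarrow> Bv i (Suc d) = - (Rv i d * Eb m) + u * (Eb m * Rv i d)"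
  by (simp_all add: mult.assoc)

lemma Kb_far:
  assumes "1 \<le> i" "i + d + 1 \<le> n" "k \<in> {1..n}" "k < i \<or> i + d + 1 < k"
  shows "Kb k * Rv i d = Rv i d * Kb k \<and> Kb k * Bv i d = - (Bv i d * Kb k)"
  using assms
proof (induction d)
  case 0
  then have "i \<in> {1..n-1}" by auto
  with 0 show ?case using KbE_far[of k i] by auto
next
  case (Suc d)
  then have IH: "Kb k * Rv i d = Rv i d * Kb k" by auto
  obtain m where md: "m = i + d + 1" by blast
  have m: "m \<in> {1..n-1}" using Suc md by auto
  have c: "Kb k * E m = E m * Kb k" "Kb k * Eb m = - (Eb m * Kb k)"
    using KbE_far[OF Suc.prems(3) m] Suc.prems(4) md by auto
  show ?case unfolding recs[OF md]
    by (simp only: NS IH xt[OF IH] c xt[OF c(1)] xt[OF c(2)])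
qed

lemma Ki_far:
  assumes "1 \<le> i" "i + d + 1 \<le> n" "k \<in> {1..n}" "k < i \<or> i + d + 1 < k"
  shows "Ki k * Rv i d = Rv i d * Ki k \<and> Ki k * Bv i d = Bv i d * Ki k"
  using assms
proof (induction d)
  case 0
  then have "i \<in> {1..n-1}" by auto
  with 0 show ?case using KiE_far[of k i] by auto
next
  case (Suc d)
  then have IH: "Ki k * Rv i d = Rv i d * Ki k" by auto
  obtain m where md: "m = i + d + 1" by blast
  have m: "m \<in> {1..n-1}" using Suc md by auto
  have c: "Ki k * E m = E m * Ki k" "Ki k * Eb m = Eb m * Ki k"
    using KiE_far[OF Suc.prems(3) m] Suc.prems(4) md by auto
  show ?case unfolding recs[OF md]
    by (simp only: NS IH xt[OF IH] c xt[OF c(1)] xt[OF c(2)])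
qed

lemma Ki_end:
  assumes "1 \<le> i" "i + d + 1 \<le> n" "k = i + d + 1"
  shows "Ki k * Rv i d = w * (Rv i d * Ki k) \<and> Ki k * Bv i d = w * (Bv i d * Ki k)"
proof (cases d)
  case 0
  then have "i \<in> {1..n-1}" using assms by auto
  with 0 assms show ?thesis using KiE_next[of i] by auto
next
  case (Suc d')
  have k: "k \<in> {1..n}" using assms by auto
  have IH: "Ki k * Rv i d' = Rv i d' * Ki k"
    using Ki_far[of i d' k] assms Suc by auto
  obtain m where md: "m = i + d' + 1" by blast
  have m: "m \<in> {1..n-1}" using assms Suc md by auto
  have c: "Ki k * E m = w * (E m * Ki k)" "Ki k * Eb m = w * (Eb m * Ki k)"
    using KiE_next[OF m] Suc md assms by auto
  show ?thesis unfolding Suc recs[OF md]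
    by (simp only: NS IH xt[OF IH] c xt[OF c(1)] xt[OF c(2)])
qed

lemma E_far:
  assumes "1 \<le> i" "i + d + 1 \<le> n" "k \<in> {1..n-1}" "i + d + 1 < k"
  shows "E k * Rv i d = Rv i d * E k \<and> Eb k * Rv i d = Rv i d * Eb k"
  using assms
proof (induction d)
  case 0
  then have "i \<in> {1..n-1}" by auto
  with 0 show ?case using EE_far[of k i] EEb_far[of k i] EEb_far[of i k] by auto
next
  case (Suc d)
  then have IH: "E k * Rv i d = Rv i d * E k" "Eb k * Rv i d = Rv i d * Eb k" by auto
  obtain m where md: "m = i + d + 1" by blast
  have m: "m \<in> {1..n-1}" using Suc md by auto
  have c: "E k * E m = E m * E k" "Eb k * E m = E m * Eb k"
    using EE_far[OF Suc.prems(3) m] EEb_far[OF m Suc.prems(3)] Suc.prems(4) md by auto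
  show ?case unfolding recs[OF md]
    by (simp only: NS IH xt[OF IH(1)] xt[OF IH(2)] c xt[OF c(1)] xt[OF c(2)])
qed

lemma Kb_end:
  assumes "1 \<le> i" "k = i + d + 1" "k \<le> n"
  shows "Kb k * Rv i d = u * (Rv i d * Kb k) - Bv i d * Ki k \<and>
         Kb k * Bv i d = Rv i d * Ki k - u * (Bv i d * Kb k)"
proof (cases d)
  case 0
  then have "i \<in> {1..n-1}" using assms by auto
  with 0 assms show ?thesis using KbE_prev[of i] by auto
next
  case (Suc d')
  obtain m where md: "m = i + d' + 1" by blast
  have m: "m \<in> {1..n-1}" and km: "k = m + 1" using assms Suc md by auto
  have k: "k \<in> {1..n}" using assms by auto
  have c1: "Kb k * Rv i d' = Rv i d' * Kb k" using Kb_far[of i d' k] assms Suc by auto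
  have c2: "Ki k * Rv i d' = Rv i d' * Ki k" using Ki_far[of i d' k] assms Suc by auto
  have c: "Kb k * E m = u * (E m * Kb k) - Eb m * Ki k"
    "Kb k * Eb m = E m * Ki k - u * (Eb m * Kb k)"
    using KbE_prev[OF m] km by auto
  show ?thesis unfolding Suc recs[OF md]
    by (simp only: NS c1 xt[OF c1] c2 xt[OF c2] c xt[OF c(1)] xt[OF c(2)]; simp add: add_ac)
qed

lemma QQ5gen:
  assumes "1 \<le> i" "a = i + d + 1" "a + 1 \<le> n"
  shows "Rv i d * E a - w * (E a * Rv i d) = Bv i d * Eb a + w * (Eb a * Bv i d)"
    "Rv i d * Eb a - w * (Eb a * Rv i d) = Bv i d * E a - w * (E a * Bv i d)"
proof -
  have "Rv i d * E a - w * (E a * Rv i d) = Bv i d * Eb a + w * (Eb a * Bv i d) \<and>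
     Rv i d * Eb a - w * (Eb a * Rv i d) = Bv i d * E a - w * (E a * Bv i d)"
  proof (cases d)
    case 0
    then have "i \<in> {1..n-1}" "i + 1 \<le> n - 1" using assms by auto
    with 0 assms show ?thesis using QQ5a[of i] by auto
  next
    case (Suc d')
    obtain m where md: "m = i + d' + 1" by blast
    have m: "m \<in> {1..n-1}" "m + 1 \<le> n - 1" and am: "a = m + 1" using assms Suc md by auto
    have a: "a \<in> {1..n-1}" using assms by auto
    let ?X = "Rv i d'"
    have c: "E a * ?X = ?X * E a" "Eb a * ?X = ?X * Eb a" using E_far[OF assms(1) _ a] assms Suc by auto
    let ?P = "E m * E a - w * (E a * E m)" and ?Q = "Eb m * Eb a + w * (Eb a * Eb m)"
    let ?P' = "E m * Eb a - w * (Eb a * E m)" and ?Q' = "Eb m * E a - w * (E a * Eb m)"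
    have PQ: "?P = ?Q" "?P' = ?Q'" using QQ5a[OF m] am by auto
    have e1: "Rv i d * E a - w * (E a * Rv i d) = - (?X * ?P) + u * (?P * ?X)"
      unfolding Suc recs[OF md]
      by (simp only: NS c xt[OF c(1)] xt[OF c(2)]; simp add: add_ac)
    have e2: "Bv i d * Eb a + w * (Eb a * Bv i d) = - (?X * ?Q) + u * (?Q * ?X)"
      unfolding Suc recs[OF md]
      by (simp only: NS c xt[OF c(1)] xt[OF c(2)]; simp add: add_ac)
    have e3: "Rv i d * Eb a - w * (Eb a * Rv i d) = - (?X * ?P') + u * (?P' * ?X)"
      unfolding Suc recs[OF md]
      by (simp only: NS c xt[OF c(1)] xt[OF c(2)]; simp add: add_ac)
    have e4: "Bv i d * E a - w * (E a * Bv i d) = - (?X * ?Q') + u * (?Q' * ?X)"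
      unfolding Suc recs[OF md]
      by (simp only: NS c xt[OF c(1)] xt[OF c(2)]; simp add: add_ac)
    show ?thesis using e1 e2 e3 e4 PQ by simp
  qed
  then show "Rv i d * E a - w * (E a * Rv i d) = Bv i d * Eb a + w * (Eb a * Bv i d)"
    "Rv i d * Eb a - w * (Eb a * Rv i d) = Bv i d * E a - w * (E a * Bv i d)" by auto
qed

lemma Kb_mid:
  assumes "1 \<le> i" "i + d + 1 \<le> n" "i < a" "a < i + d + 1"
  shows "Kb a * Rv i d = Rv i d * Kb a \<and> Kb a * Bv i d = - (Bv i d * Kb a)"
  using assms
proof (induction d)
  case 0
  then show ?case by auto
next
  case (Suc d)
  obtain m where md: "m = i + d + 1" by blast
  have m: "m \<in> {1..n-1}" using Suc md by auto
  have ak: "a \<in> {1..n}" using Suc by auto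
  show ?case
  proof (cases "a = m")
    case False
    then have IH: "Kb a * Rv i d = Rv i d * Kb a" using Suc md by auto
    have c: "Kb a * E m = E m * Kb a" "Kb a * Eb m = - (Eb m * Kb a)"
      using KbE_far[OF ak m] False md Suc by auto
    show ?thesis unfolding recs[OF md]
      by (simp only: NS IH xt[OF IH] c xt[OF c(1)] xt[OF c(2)]; simp add: add_ac)
  next
    case True
    have e: "Kb a * Rv i d = u * (Rv i d * Kb a) - Bv i d * Ki a"
         "Kb a * Bv i d = Rv i d * Ki a - u * (Bv i d * Kb a)"
      using Kb_end[of i a d] Suc True md by auto
    have ke: "Ki a * Rv i d = w * (Rv i d * Ki a)" "Ki a * Bv i d = w * (Bv i d * Ki a)"
      using Ki_end[of i d a] Suc True md by auto
    have c: "Kb a * E a = w * (E a * Kb a) + Eb a * Ki a"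
      "Kb a * Eb a = E a * Ki a - w * (Eb a * Kb a)"
      "Ki a * E a = u * (E a * Ki a)" "Ki a * Eb a = u * (Eb a * Ki a)"
      using KbE_same[OF m] KiE_same[OF m] True by auto
    have q: "Rv i d * E a - w * (E a * Rv i d) = Bv i d * Eb a + w * (Eb a * Bv i d)"
      "Rv i d * Eb a - w * (Eb a * Rv i d) = Bv i d * E a - w * (E a * Bv i d)"
      using QQ5gen[of i a d] Suc True md by auto
    have s1: "Kb a * Rv i (Suc d) = Rv i (Suc d) * Kb a +
       u * ((Bv i d * E a - w * (E a * Bv i d)) - (Rv i d * Eb a - w * (Eb a * Rv i d))) * Ki a"
      unfolding recs[OF md] True[symmetric] md[symmetric]
      by (simp only: NS e xt[OF e(1)] xt[OF e(2)] ke xt[OF ke(1)] xt[OF ke(2)]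
          c xt[OF c(1)] xt[OF c(2)] xt[OF c(3)] xt[OF c(4)]; simp add: add_ac)
    have s2: "Kb a * Bv i (Suc d) = - (Bv i (Suc d) * Kb a) +
       u * ((Bv i d * Eb a + w * (Eb a * Bv i d)) - (Rv i d * E a - w * (E a * Rv i d))) * Ki a"
      unfolding recs[OF md] True[symmetric] md[symmetric]
      by (simp only: NS e xt[OF e(1)] xt[OF e(2)] ke xt[OF ke(1)] xt[OF ke(2)]
          c xt[OF c(1)] xt[OF c(2)] xt[OF c(3)] xt[OF c(4)]; simp add: add_ac)
    show ?thesis using s1 s2 q by simp
  qed
qed

lemma Kb_first:
  assumes "1 \<le> i" "i + d + 2 \<le> n"
  shows "Kb i * Rv i (Suc d) = w * (Rv i (Suc d) * Kb i) - Eb i * (Rv (i+1) d * Ki i)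
            + u * (Rv (i+1) d * (Eb i * Ki i)) \<and>
         Kb i * Bv i (Suc d) = - (w * (Bv i (Suc d) * Kb i)) - Eb i * (Bv (i+1) d * Ki i)
            - u * (Bv (i+1) d * (Eb i * Ki i))"
  using assms
proof (induction d)
  case 0
  obtain m where md: "m = i + 0 + 1" by blast
  have i: "i \<in> {1..n-1}" "i \<in> {1..n}" and m: "m \<in> {1..n-1}" using 0 md by auto
  have c: "Kb i * E i = w * (E i * Kb i) + Eb i * Ki i"
    "Kb i * Eb i = E i * Ki i - w * (Eb i * Kb i)"
    "Kb i * E m = E m * Kb i" "Kb i * Eb m = - (Eb m * Kb i)"
    "Ki i * E m = E m * Ki i" "Ki i * Eb m = Eb m * Ki i"
    using KbE_same[OF i(1)] KbE_far[OF i(2) m] KiE_far[OF i(2) m] md by auto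
  have r: "Rv (i+1) 0 = E m" "Bv (i+1) 0 = Eb m" using md by auto
  show ?case unfolding recs[OF md] r
    by (simp only: NS c xt[OF c(1)] xt[OF c(2)] xt[OF c(3)] xt[OF c(4)] xt[OF c(5)] xt[OF c(6)]
        Erv.simps(1) Ebrv.simps(1); simp add: add_ac)
next
  case (Suc d)
  obtain m where md: "m = i + Suc d + 1" by blast
  have md': "m = (i + 1) + d + 1" using md by simp
  have i: "i \<in> {1..n}" and m: "m \<in> {1..n-1}" using Suc md by auto
  have IH: "Kb i * Rv i (Suc d) = w * (Rv i (Suc d) * Kb i) - Eb i * (Rv (i+1) d * Ki i)
            + u * (Rv (i+1) d * (Eb i * Ki i))" using Suc by auto
  have c: "Kb i * E m = E m * Kb i" "Kb i * Eb m = - (Eb m * Kb i)"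
    "Ki i * E m = E m * Ki i" "Ki i * Eb m = Eb m * Ki i"
    "E m * Eb i = Eb i * E m" "Eb m * Eb i = - (Eb i * Eb m)"
    using KbE_far[OF i m] KiE_far[OF i m] EEb_far[OF m, of i] EE_far[OF m, of i] md Suc.prems by auto
  show ?case unfolding recs[OF md] recs[OF md']
    by (simp only: NS IH xt[OF IH] c xt[OF c(1)] xt[OF c(2)] xt[OF c(3)] xt[OF c(4)] xt[OF c(5)] xt[OF c(6)];
        simp add: add_ac)
qed

end

theorem lemma2p7:
  fixes sc :: "'k::field_char_0 \<Rightarrow> 'a::ring_1" and v :: 'k and n :: nat
    and K Ki Kb E F Eb Fb :: "nat \<Rightarrow> 'a" and i j a :: nat
  assumes "transcendental_rat v"
    and "central_alg_hom sc"
    and "qq_rels sc v n K Ki Kb E F Eb Fb"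
    and "1 \<le> i" "i < j" "j \<le> n" "1 \<le> a" "a \<le> n"
  shows
   "((a < i \<or> (i < a \<and> a < j) \<or> j < a) \<longrightarrow>
       Kb a * Eij sc v E i j = Eij sc v E i j * Kb a \<and>
       Kb a * Ebij sc v E Eb i j = - (Ebij sc v E Eb i j * Kb a)) \<and>
    ((a = i \<and> i + 1 < j) \<longrightarrow>
       Kb a * Eij sc v E i j =
         sc v * Eij sc v E i j * Kb i - Eb i * Eij sc v E (i + 1) j * Ki i
         + sc (inverse v) * Eij sc v E (i + 1) j * Eb i * Ki i \<and>
       Kb a * Ebij sc v E Eb i j =
         - (sc v * Ebij sc v E Eb i j * Kb i) - Eb i * Ebij sc v E Eb (i + 1) j * Ki i
         - sc (inverse v) * Ebij sc v E Eb (i + 1) j * Eb i * Ki i) \<and>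
    (a = j \<longrightarrow>
       Kb a * Eij sc v E i j = sc (inverse v) * Eij sc v E i j * Kb j - Ebij sc v E Eb i j * Ki j \<and>
       Kb a * Ebij sc v E Eb i j = - (sc (inverse v) * Ebij sc v E Eb i j * Kb j) + Eij sc v E i j * Ki j)"
proof -
  have v0: "v \<noteq> 0"
  proof
    assume "v = 0"
    have "[:0, 1:] \<noteq> (0::rat poly)" by simp
    with assms(1) have "poly (map_poly of_rat [:0, 1::rat:]) v \<noteq> 0"
      unfolding transcendental_rat_def by blast
    with \<open>v = 0\<close> show False by (simp add: map_poly_pCons)
  qed
  interpret Q: QQ sc v n K Ki Kb E F Eb Fb
    using assms(2,3) v0 by unfold_locales auto
  define d where "d = j - i - 1"
  have jd: "j = i + d + 1" using assms d_def by auto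
  have EE: "Eij sc v E i j = Erv sc v E i d" "Ebij sc v E Eb i j = Ebrv sc v E Eb i d"
    unfolding Eij_def Ebij_def d_def by auto
  have P1: "(a < i \<or> (i < a \<and> a < j) \<or> j < a) \<longrightarrow>
       Kb a * Eij sc v E i j = Eij sc v E i j * Kb a \<and>
       Kb a * Ebij sc v E Eb i j = - (Ebij sc v E Eb i j * Kb a)"
  proof
    assume h: "a < i \<or> (i < a \<and> a < j) \<or> j < a"
    show "Kb a * Eij sc v E i j = Eij sc v E i j * Kb a \<and>
       Kb a * Ebij sc v E Eb i j = - (Ebij sc v E Eb i j * Kb a)"
    proof (cases "i < a \<and> a < j")
      case True
      then show ?thesis unfolding EE using Q.Kb_mid[of i d a] assms jd by auto
    next
      case False
      then show ?thesis unfolding EE using Q.Kb_far[of i d a] assms jd h by auto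
    qed
  qed
  have P2: "(a = i \<and> i + 1 < j) \<longrightarrow>
       Kb a * Eij sc v E i j =
         sc v * Eij sc v E i j * Kb i - Eb i * Eij sc v E (i + 1) j * Ki i
         + sc (inverse v) * Eij sc v E (i + 1) j * Eb i * Ki i \<and>
       Kb a * Ebij sc v E Eb i j =
         - (sc v * Ebij sc v E Eb i j * Kb i) - Eb i * Ebij sc v E Eb (i + 1) j * Ki i
         - sc (inverse v) * Ebij sc v E Eb (i + 1) j * Eb i * Ki i"
  proof
    assume h: "a = i \<and> i + 1 < j"
    define d' where "d' = j - i - 2"
    have dd: "d = Suc d'" using h d_def d'_def by auto
    have EE2: "Eij sc v E (i+1) j = Erv sc v E (i+1) d'" "Ebij sc v E Eb (i+1) j = Ebrv sc v E Eb (i+1) d'"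
      unfolding Eij_def Ebij_def d'_def by (auto simp: numeral_2_eq_2)
    have "i + d' + 2 \<le> n" using assms h d'_def by auto
    then show "Kb a * Eij sc v E i j =
         sc v * Eij sc v E i j * Kb i - Eb i * Eij sc v E (i + 1) j * Ki i
         + sc (inverse v) * Eij sc v E (i + 1) j * Eb i * Ki i \<and>
       Kb a * Ebij sc v E Eb i j =
         - (sc v * Ebij sc v E Eb i j * Kb i) - Eb i * Ebij sc v E Eb (i + 1) j * Ki i
         - sc (inverse v) * Ebij sc v E Eb (i + 1) j * Eb i * Ki i"
      unfolding EE EE2 dd using Q.Kb_first[of i d'] assms h by (simp add: mult.assoc)
  qed
  have P3: "a = j \<longrightarrow>
       Kb a * Eij sc v E i j = sc (inverse v) * Eij sc v E i j * Kb j - Ebij sc v E Eb i j * Ki j \<and>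
       Kb a * Ebij sc v E Eb i j = - (sc (inverse v) * Ebij sc v E Eb i j * Kb j) + Eij sc v E i j * Ki j"
  proof
    assume h: "a = j"
    show "Kb a * Eij sc v E i j = sc (inverse v) * Eij sc v E i j * Kb j - Ebij sc v E Eb i j * Ki j \<and>
       Kb a * Ebij sc v E Eb i j = - (sc (inverse v) * Ebij sc v E Eb i j * Kb j) + Eij sc v E i j * Ki j"
      unfolding EE h using Q.Kb_end[of i j d] assms jd by (simp add: mult.assoc)
  qed
  show ?thesis using P1 P2 P3 by blast
qed

end
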